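(* Let $\rho:\mathbb{Z}\to[0,\infty)$ be a weight with finite moments, and let $f,g$ be polynomials with $\deg f\le 2$, $\deg g\le 1$, satisfying $f(x+1)\rho(x+1)-f(x)\rho(x)=g(x)\rho(x)$ for all $x\in\mathbb{Z}$, and such that $\rho(x)f(x)$ vanishes at the end points of the support of $\rho$. Let $\{p_n\}_{n\ge0}$ be the monic polynomials ($\deg p_n=n$) orthogonal with respect to $\rho$: $\sum_{x\in\mathbb{Z}}p_m(x)p_n(x)\rho(x)=h_n\delta_{n,m}$ with $h_n>0$. Let $\mathcal{A}_{\rm l}=g(x)T+f(x)(\Delta+\nabla)$ with $T\phi(x)=\phi(x+1)$, $\Delta\phi(x)=\phi(x+1)-\phi(x)$, $\nabla\phi(x)=\phi(x)-\phi(x-1)$. Then there are real constants $c_n$ ($n\ge0$), depending only on $n$, $f$ and $g$, such that for all $n\ge0$ $$\mathcal{A}_{\rm l}p_n(x)=-\frac{c_n}{h_{n+1}}p_{n+1}(x)+\frac{c_{n-1}}{h_{n-1}}p_{n-1}(x)$$ (with the convention $p_{-1}=0$). Equivalently, with $\langle\phi,\psi\rangle=\sum_{x\in\mathbb{Z}}\phi(x)\psi(x)\rho(x)$, one has $\langle p_j,\mathcal{A}_{\rm l}p_k\rangle=c_j\delta_{k,j+1}-c_k\delta_{j,k+1}$ for all $j,k\ge0$.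
   Context: $\rho$ is taken to be zero outside its support; the orthogonal polynomials are assumed to exist for all degrees $n\ge0$. *)

theory Defs
  imports "HOL-Analysis.Analysis" "HOL-Computational_Algebra.Polynomial"
begin

definition shiftT :: "(int \<Rightarrow> real) \<Rightarrow> int \<Rightarrow> real" where
  "shiftT \<phi> x = \<phi> (x + 1)"

definition fdiff :: "(int \<Rightarrow> real) \<Rightarrow> int \<Rightarrow> real" where
  "fdiff \<phi> x = \<phi> (x + 1) - \<phi> x"

definition bdiff :: "(int \<Rightarrow> real) \<Rightarrow> int \<Rightarrow> real" where
  "bdiff \<phi> x = \<phi> x - \<phi> (x - 1)"

definition Al :: "real poly \<Rightarrow> real poly \<Rightarrow> (int \<Rightarrow> real) \<Rightarrow> int \<Rightarrow> real" where
  "Al f g \<phi> x = poly g (real_of_int x) * shiftT \<phi> x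
                + poly f (real_of_int x) * (fdiff \<phi> x + bdiff \<phi> x)"

definition wip :: "(int \<Rightarrow> real) \<Rightarrow> (int \<Rightarrow> real) \<Rightarrow> (int \<Rightarrow> real) \<Rightarrow> real" where
  "wip \<rho> \<phi> \<psi> = (\<Sum>\<^sub>\<infinity>x. \<phi> x * \<psi> x * \<rho> x)"

definition wsupp :: "(int \<Rightarrow> real) \<Rightarrow> int set" where
  "wsupp \<rho> = {x. \<rho> x \<noteq> 0}"

text \<open>rho f vanishes at the end points of the support of rho: at a finite end point
  the value is zero; at an infinite end point the limit is zero.\<close>
definition vanishes_at_endpoints :: "(int \<Rightarrow> real) \<Rightarrow> real poly \<Rightarrow> bool" where
  "vanishes_at_endpoints \<rho> f \<longleftrightarrow>
     (\<forall>a. a \<in> wsupp \<rho> \<and> (\<forall>y\<in>wsupp \<rho>. a \<le> y) \<longrightarrow> \<rho> a * poly f (real_of_int a) = 0) \<and>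
     (\<forall>b. b \<in> wsupp \<rho> \<and> (\<forall>y\<in>wsupp \<rho>. y \<le> b) \<longrightarrow> \<rho> b * poly f (real_of_int b) = 0) \<and>
     (\<not> bdd_below (wsupp \<rho>) \<longrightarrow> ((\<lambda>x. \<rho> x * poly f (real_of_int x)) \<longlongrightarrow> 0) at_bot) \<and>
     (\<not> bdd_above (wsupp \<rho>) \<longrightarrow> ((\<lambda>x. \<rho> x * poly f (real_of_int x)) \<longlongrightarrow> 0) at_top)"

end

theory Submission
  imports Defs
begin

lemma infsum_diff_real:
  fixes f g :: "'a \<Rightarrow> real"
  assumes "f summable_on A" "g summable_on A"
  shows "infsum (\<lambda>x. f x - g x) A = infsum f A - infsum g A"
proof -
  have "infsum (\<lambda>x. f x + (-1) * g x) A = infsum f A + infsum (\<lambda>x. (-1) * g x) A"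
    by (rule infsum_add[OF assms(1) summable_on_cmult_right[OF assms(2)]])
  moreover have "infsum (\<lambda>x. (-1) * g x) A = (-1) * infsum g A"
    by (rule infsum_cmult_right')
  ultimately show ?thesis by simp
qed

lemma infsum_fsum:
  fixes F :: "'i \<Rightarrow> 'a \<Rightarrow> real"
  assumes "finite I" "\<forall>i\<in>I. F i summable_on A"
  shows "(\<lambda>x. \<Sum>i\<in>I. F i x) summable_on A \<and> infsum (\<lambda>x. \<Sum>i\<in>I. F i x) A = (\<Sum>i\<in>I. infsum (F i) A)"
  using assms
proof (induction I rule: finite_induct)
  case empty
  then show ?case by simp
next
  case (insert i I)
  then have s1: "F i summable_on A" and s2: "(\<lambda>x. \<Sum>i\<in>I. F i x) summable_on A"
    and e: "infsum (\<lambda>x. \<Sum>i\<in>I. F i x) A = (\<Sum>i\<in>I. infsum (F i) A)" by auto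
  show ?case using insert(1,2) summable_on_add[OF s1 s2] infsum_add[OF s1 s2] e by simp
qed

lemma poly_rho_summable:
  fixes \<rho> :: "int \<Rightarrow> real"
  assumes nonneg: "\<forall>x. \<rho> x \<ge> 0"
    and moments: "\<forall>k::nat. (\<lambda>x. \<bar>real_of_int x\<bar> ^ k * \<rho> x) summable_on UNIV"
  shows "(\<lambda>x. poly P (real_of_int x) * \<rho> x) summable_on UNIV"
proof -
  have mon: "(\<lambda>x. real_of_int x ^ i * \<rho> x) summable_on UNIV" for i
  proof -
    have "(\<lambda>x. norm (\<bar>real_of_int x\<bar> ^ i * \<rho> x)) summable_on UNIV"
      using moments[rule_format, of i] by (rule summable_on_iff_abs_summable_on_real[THEN iffD1])
    then have "(\<lambda>x. norm (real_of_int x ^ i * \<rho> x)) summable_on UNIV"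
      by (rule Infinite_Sum.abs_summable_on_comparison_test) (simp add: abs_mult power_abs nonneg)
    then show ?thesis by (rule summable_on_iff_abs_summable_on_real[THEN iffD2])
  qed
  have "\<forall>i\<in>{..degree P}. (\<lambda>x. coeff P i * (real_of_int x ^ i * \<rho> x)) summable_on UNIV"
    using mon by (intro ballI summable_on_cmult_right) 
  then have "(\<lambda>x. \<Sum>i\<le>degree P. coeff P i * (real_of_int x ^ i * \<rho> x)) summable_on UNIV"
    using infsum_fsum[of "{..degree P}" "\<lambda>i x. coeff P i * (real_of_int x ^ i * \<rho> x)"] by simp
  moreover have "(\<lambda>x. \<Sum>i\<le>degree P. coeff P i * (real_of_int x ^ i * \<rho> x)) = (\<lambda>x. poly P (real_of_int x) * \<rho> x)"
    by (rule ext) (simp only: poly_altdef sum_distrib_right mult.assoc)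
  ultimately show ?thesis by simp
qed

lemma expand_basis:
  fixes p :: "nat \<Rightarrow> real poly"
  assumes deg_p: "\<forall>n. degree (p n) = n" and monic: "\<forall>n. lead_coeff (p n) = 1"
  shows "degree Q \<le> m \<Longrightarrow> \<exists>a::nat\<Rightarrow>real. Q = (\<Sum>k\<le>m. smult (a k) (p k))"
proof (induction m arbitrary: Q)
  case 0
  have "Q = smult (coeff Q 0) (p 0)"
  proof (rule poly_eqI)
    fix i
    show "coeff Q i = coeff (smult (coeff Q 0) (p 0)) i"
    proof (cases i)
      case 0
      then show ?thesis using monic deg_p[rule_format, of 0] by (metis coeff_smult mult.right_neutral)
    next
      case (Suc j)
      then show ?thesis using 0 deg_p[rule_format, of 0] by (simp add: coeff_eq_0)
    qed
  qed
  then show ?case by (intro exI[of _ "\<lambda>_. coeff Q 0"]) simp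
next
  case (Suc m)
  define Q' where "Q' = Q - smult (coeff Q (Suc m)) (p (Suc m))"
  have d1: "degree Q' \<le> Suc m" unfolding Q'_def using Suc.prems deg_p
    by (metis degree_diff_le degree_smult_le le_trans)
  have c1: "coeff Q' (Suc m) = 0" unfolding Q'_def using monic deg_p by simp
  have "degree Q' \<le> m"
  proof (rule ccontr)
    assume "\<not> degree Q' \<le> m"
    then have "degree Q' = Suc m" using d1 by simp
    moreover have "Q' = 0" using c1 calculation by (metis leading_coeff_0_iff)
    ultimately show False by simp
  qed
  then obtain a where a: "Q' = (\<Sum>k\<le>m. smult (a k) (p k))" using Suc.IH by blast
  define a' where "a' = a(Suc m := coeff Q (Suc m))"
  have "Q = Q' + smult (coeff Q (Suc m)) (p (Suc m))" unfolding Q'_def by simp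
  also have "\<dots> = (\<Sum>k\<le>Suc m. smult (a' k) (p k))"
    unfolding a sum.atMost_Suc a'_def by (intro arg_cong2[where f="(+)"] sum.cong) auto
  finally show ?case by blast
qed

theorem proposition3p8:
  fixes \<rho> :: "int \<Rightarrow> real" and f g :: "real poly"
    and p :: "nat \<Rightarrow> real poly" and h :: "nat \<Rightarrow> real"
  assumes nonneg: "\<forall>x. \<rho> x \<ge> 0"
    and moments: "\<forall>k::nat. (\<lambda>x. \<bar>real_of_int x\<bar> ^ k * \<rho> x) summable_on UNIV"
    and deg_f: "degree f \<le> 2" and deg_g: "degree g \<le> 1"
    and pearson: "\<forall>x. poly f (real_of_int (x + 1)) * \<rho> (x + 1) - poly f (real_of_int x) * \<rho> x
                       = poly g (real_of_int x) * \<rho> x"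
    and boundary: "vanishes_at_endpoints \<rho> f"
    and deg_p: "\<forall>n. degree (p n) = n" and monic: "\<forall>n. lead_coeff (p n) = 1"
    and h_pos: "\<forall>n. h n > 0"
    and orth: "\<forall>m n. wip \<rho> (\<lambda>x. poly (p m) (real_of_int x)) (\<lambda>x. poly (p n) (real_of_int x))
                    = (if n = m then h n else 0)"
  shows "\<exists>c :: nat \<Rightarrow> real.
           (\<forall>n x. Al f g (\<lambda>y. poly (p n) (real_of_int y)) x
                  = - (c n / h (n + 1)) * poly (p (n + 1)) (real_of_int x)
                    + (if n = 0 then 0 else c (n - 1) / h (n - 1) * poly (p (n - 1)) (real_of_int x))) \<and>
           (\<forall>j k. wip \<rho> (\<lambda>y. poly (p j) (real_of_int y)) (Al f g (\<lambda>y. poly (p k) (real_of_int y)))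
                  = (if k = j + 1 then c j else 0) - (if j = k + 1 then c k else 0))"
proof -
  have summ: "\<And>R. (\<lambda>x. poly R (real_of_int x) * \<rho> x) summable_on UNIV"
    using poly_rho_summable[OF nonneg moments] .
  define Aop where "Aop Q = g * pcompose Q [:1,1:] + f * (pcompose Q [:1,1:] - pcompose Q [:-1,1:])" for Q
  have Al_fun: "Al f g (\<lambda>y. poly Q (real_of_int y)) = (\<lambda>y. poly (Aop Q) (real_of_int y))" for Q
    by (rule ext) (simp add: Al_def shiftT_def fdiff_def bdiff_def Aop_def poly_pcompose algebra_simps)
  define S where "S Q R = infsum (\<lambda>x. poly Q (real_of_int x) * poly R (real_of_int x + 1) *
      ((poly g (real_of_int x) + poly f (real_of_int x)) * \<rho> x)) UNIV" for Q R
  have pe: "poly f (real_of_int x + 1) * \<rho> (x + 1) = (poly g (real_of_int x) + poly f (real_of_int x)) * \<rho> x" for x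
    using pearson[rule_format, of x] by (simp add: algebra_simps)
  have antisym_form: "wip \<rho> (\<lambda>y. poly Q (real_of_int y)) (\<lambda>y. poly (Aop R) (real_of_int y)) = S Q R - S R Q" for Q R
  proof -
    define a where "a x = poly Q (real_of_int x) * poly R (real_of_int x + 1) *
      ((poly g (real_of_int x) + poly f (real_of_int x)) * \<rho> x)" for x
    define b where "b x = poly Q (real_of_int x) * poly R (real_of_int x - 1) * (poly f (real_of_int x) * \<rho> x)" for x
    have sa: "a summable_on UNIV"
      using summ[of "Q * pcompose R [:1,1:] * (g + f)"] unfolding a_def
      by (simp add: poly_pcompose algebra_simps)
    have sb: "b summable_on UNIV"
      using summ[of "Q * pcompose R [:-1,1:] * f"] unfolding b_def
      by (simp add: poly_pcompose algebra_simps)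
    have "wip \<rho> (\<lambda>y. poly Q (real_of_int y)) (\<lambda>y. poly (Aop R) (real_of_int y)) = infsum (\<lambda>x. a x - b x) UNIV"
      unfolding wip_def a_def b_def by (rule infsum_cong) (simp add: Aop_def poly_pcompose algebra_simps)
    also have "\<dots> = infsum a UNIV - infsum b UNIV" by (rule infsum_diff_real[OF sa sb])
    also have "infsum b UNIV = infsum (\<lambda>x. b (x + 1)) UNIV"
      using infsum_reindex_bij_betw[OF bij_plus_right[of "1::int"], of b] by simp
    also have "\<dots> = S R Q" unfolding S_def b_def
    proof (rule infsum_cong)
      fix x :: int
      have "poly Q (real_of_int (x + 1)) * poly R (real_of_int (x + 1) - 1) * (poly f (real_of_int (x + 1)) * \<rho> (x + 1))
        = poly Q (real_of_int x + 1) * poly R (real_of_int x) * (poly f (real_of_int x + 1) * \<rho> (x + 1))"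
        by simp
      also have "\<dots> = poly R (real_of_int x) * poly Q (real_of_int x + 1) *
         ((poly g (real_of_int x) + poly f (real_of_int x)) * \<rho> x)" by (simp add: pe)
      finally show "poly Q (real_of_int (x + 1)) * poly R (real_of_int (x + 1) - 1) * (poly f (real_of_int (x + 1)) * \<rho> (x + 1))
        = poly R (real_of_int x) * poly Q (real_of_int x + 1) *
         ((poly g (real_of_int x) + poly f (real_of_int x)) * \<rho> x)" .
    qed
    finally show ?thesis unfolding S_def a_def by simp
  qed
  have anti: "wip \<rho> (\<lambda>y. poly Q (real_of_int y)) (\<lambda>y. poly (Aop R) (real_of_int y))
      = - wip \<rho> (\<lambda>y. poly R (real_of_int y)) (\<lambda>y. poly (Aop Q) (real_of_int y))" for Q R
    using antisym_form[of Q R] antisym_form[of R Q] by simp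
  have degA: "degree (Aop (p n)) \<le> n + 1" for n
  proof -
    have d1: "degree (pcompose (p n) [:c, 1:]) = n" for c :: real
      using deg_p by (simp add: degree_pcompose)
    have l1: "lead_coeff (pcompose (p n) [:c, 1:]) = 1" for c :: real
      using deg_p monic by (simp add: lead_coeff_comp)
    define d where "d = pcompose (p n) [:1,1:] - pcompose (p n) [:-1,1:]"
    have dd: "degree d \<le> n" unfolding d_def by (intro degree_diff_le) (simp_all add: d1)
    have cd: "coeff d n = 0" unfolding d_def using d1 l1 by (metis coeff_diff diff_self)
    have "degree (f * d) \<le> n + 1"
    proof (cases "d = 0")
      case True then show ?thesis by simp
    next
      case False
      then have "degree d \<noteq> n" using cd by (metis leading_coeff_0_iff)
      then have "degree d + 1 \<le> n" using dd by simp
      then show ?thesis using degree_mult_le[of f d] deg_f by simp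
    qed
    moreover have "degree (g * pcompose (p n) [:1,1:]) \<le> n + 1"
      using degree_mult_le[of g "pcompose (p n) [:1,1:]"] deg_g d1 by simp
    ultimately show ?thesis unfolding Aop_def d_def by (metis degree_add_le)
  qed
  let ?w = "\<lambda>Q R. wip \<rho> (\<lambda>y. poly Q (real_of_int y)) (\<lambda>y. poly R (real_of_int y))"
  have coef: "?w (p j) (\<Sum>k\<le>m. smult (a k) (p k)) = (if j \<le> m then a j * h j else 0)" for j m a
  proof -
    have "?w (p j) (\<Sum>k\<le>m. smult (a k) (p k)) = infsum (\<lambda>x. \<Sum>k\<le>m. a k * (poly (p j) (real_of_int x) * poly (p k) (real_of_int x) * \<rho> x)) UNIV"
      unfolding wip_def by (rule infsum_cong) (simp add: poly_sum sum_distrib_left sum_distrib_right algebra_simps)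
    also have "\<dots> = (\<Sum>k\<le>m. infsum (\<lambda>x. a k * (poly (p j) (real_of_int x) * poly (p k) (real_of_int x) * \<rho> x)) UNIV)"
    proof (rule conjunct2[OF infsum_fsum])
      show "\<forall>k\<in>{..m}. (\<lambda>x. a k * (poly (p j) (real_of_int x) * poly (p k) (real_of_int x) * \<rho> x)) summable_on UNIV"
      proof
        fix k
        show "(\<lambda>x. a k * (poly (p j) (real_of_int x) * poly (p k) (real_of_int x) * \<rho> x)) summable_on UNIV"
          using summ[of "p j * p k"] by (intro summable_on_cmult_right) simp
      qed
    qed simp
    also have "\<dots> = (\<Sum>k\<le>m. a k * ?w (p j) (p k))"
      unfolding wip_def by (intro sum.cong refl infsum_cmult_right')
    also have "\<dots> = (\<Sum>k\<le>m. if k = j then a k * h k else 0)"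
      using orth by (intro sum.cong refl) simp
    also have "\<dots> = (if j \<le> m then a j * h j else 0)" by simp
    finally show ?thesis .
  qed
  have vanish: "degree Q < j \<Longrightarrow> ?w (p j) Q = 0" for Q j
  proof -
    assume "degree Q < j"
    obtain a where "Q = (\<Sum>k\<le>degree Q. smult (a k) (p k))"
      using expand_basis[OF deg_p monic, of Q "degree Q"] by blast
    then show ?thesis using coef[where j=j and m="degree Q" and a=a] \<open>degree Q < j\<close> by simp
  qed
  have zero: "?w (p j) (Aop (p k)) = 0" if "j \<noteq> k + 1" "k \<noteq> j + 1" for j k
  proof -
    have "k + 1 < j \<or> j + 1 < k \<or> j = k" using that by linarith
    then consider "k + 1 < j" | "j + 1 < k" | "j = k" by blast
    then show ?thesis
    proof cases
      case 1 then show ?thesis using vanish degA[of k] by simp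
    next
      case 2 then show ?thesis using anti[of "p j" "p k"] vanish[where Q="Aop (p j)" and j=k] degA[of j] by simp
    next
      case 3 then show ?thesis using anti[of "p j" "p j"] by simp
    qed
  qed
  define c where "c n = ?w (p n) (Aop (p (n + 1)))" for n
  have cneg: "?w (p (n + 1)) (Aop (p n)) = - c n" for n
    unfolding c_def using anti[of "p (n+1)" "p n"] by simp
  have part2: "?w (p j) (Aop (p k)) = (if k = j + 1 then c j else 0) - (if j = k + 1 then c k else 0)" for j k
    using zero[of j k] cneg[of k] c_def by auto
  have part1: "poly (Aop (p n)) x = - (c n / h (n + 1)) * poly (p (n + 1)) x
       + (if n = 0 then 0 else c (n - 1) / h (n - 1) * poly (p (n - 1)) x)" for n x
  proof -
    obtain a where a: "Aop (p n) = (\<Sum>k\<le>n+1. smult (a k) (p k))"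
      using expand_basis[OF deg_p monic degA[of n]] by blast
    have ak: "a k = ?w (p k) (Aop (p n)) / h k" if "k \<le> n + 1" for k
      using coef[where j=k and m="n+1" and a=a] that h_pos[rule_format, of k] a by simp
    have ak2: "a k = (if k = n + 1 then - (c n / h (n + 1)) else 0) + (if n \<noteq> 0 \<and> k = n - 1 then c (n - 1) / h (n - 1) else 0)"
      if "k \<le> n + 1" for k
    proof -
      consider "k = n + 1" | "n \<noteq> 0" "k = n - 1" | "k \<noteq> n + 1" "\<not> (n \<noteq> 0 \<and> k = n - 1)" by blast
      then show ?thesis
      proof cases
        case 1 then show ?thesis using ak[OF that] cneg[of n] by auto
      next
        case 2
        then have "n = (n - 1) + 1" by simp
        then have "?w (p (n - 1)) (Aop (p n)) = c (n - 1)" unfolding c_def by metis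
        then show ?thesis using ak[OF that] 2 by simp
      next
        case 3
        then have "k \<noteq> n + 1" "n \<noteq> k + 1" by auto
        then show ?thesis using ak[OF that] zero[of k n] 3 by auto
      qed
    qed
    have "poly (Aop (p n)) x = (\<Sum>k\<le>n+1. a k * poly (p k) x)"
      unfolding a by (simp add: poly_sum)
    also have "\<dots> = (\<Sum>k\<le>n+1. (if k = n + 1 then - (c n / h (n + 1)) * poly (p k) x else 0)
        + (if n \<noteq> 0 \<and> k = n - 1 then c (n - 1) / h (n - 1) * poly (p k) x else 0))"
      by (intro sum.cong refl) (simp add: ak2 distrib_right)
    also have "\<dots> = - (c n / h (n + 1)) * poly (p (n + 1)) x
       + (if n = 0 then 0 else c (n - 1) / h (n - 1) * poly (p (n - 1)) x)"
      by (simp add: sum.distrib)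
    finally show ?thesis .
  qed
  show ?thesis
  proof (intro exI[of _ c] conjI allI)
    fix n x
    show "Al f g (\<lambda>y. poly (p n) (real_of_int y)) x
                  = - (c n / h (n + 1)) * poly (p (n + 1)) (real_of_int x)
                    + (if n = 0 then 0 else c (n - 1) / h (n - 1) * poly (p (n - 1)) (real_of_int x))"
      unfolding Al_fun by (rule part1)
  next
    fix j k
    show "wip \<rho> (\<lambda>y. poly (p j) (real_of_int y)) (Al f g (\<lambda>y. poly (p k) (real_of_int y)))
                  = (if k = j + 1 then c j else 0) - (if j = k + 1 then c k else 0)"
      unfolding Al_fun by (rule part2)
  qed
qed

end
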